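(* Let $F$ be a family, $w$ a function from elements to $\mathbb{N}$ with $w(a)>0$ for some $a\in\bigcup F$, and $K,S$ sets with $K\cup S=\bigcup F$ and $K\cap S=\emptyset$. If $\mathrm{hs}(K',S,F,w,\bigcup F)\ge 0$ for every $K'\subseteq K$, then $F$ is Frankl's.
   Context: All sets and families are finite. $F$ is Frankl's if there is $a \in \bigcup F$ with $2\cdot|\{A\in F: a\in A\}| \ge |F|$. $\mathrm{sw}(w,A)=\sum_{a\in A}w(a)$; $\mathrm{ss}(A,w,X)=2\,\mathrm{sw}(w,A)-\mathrm{sw}(w,X)\in\mathbb{Z}$. The $S$-hypercube with base $K$ is $H(K,S)=\{A : K\subseteq A\subseteq K\cup S\}$. The hyper-share is $\mathrm{hs}(K,S,F,w,X)=\sum_{A\in H(K,S)\cap F}\mathrm{ss}(A,w,X)$. *)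

theory Defs
  imports Main
begin

definition frankls :: "'a set set \<Rightarrow> bool" where
  "frankls F \<longleftrightarrow> (\<exists>a\<in>\<Union>F. 2 * card {A\<in>F. a \<in> A} \<ge> card F)"

definition sw :: "('a \<Rightarrow> nat) \<Rightarrow> 'a set \<Rightarrow> nat" where
  "sw w A = (\<Sum>a\<in>A. w a)"

definition ss :: "'a set \<Rightarrow> ('a \<Rightarrow> nat) \<Rightarrow> 'a set \<Rightarrow> int" where
  "ss A w X = 2 * int (sw w A) - int (sw w X)"

definition hypercube :: "'a set \<Rightarrow> 'a set \<Rightarrow> 'a set set" where
  "hypercube K S = {A. K \<subseteq> A \<and> A \<subseteq> K \<union> S}"

definition hs :: "'a set \<Rightarrow> 'a set \<Rightarrow> 'a set set \<Rightarrow> ('a \<Rightarrow> nat) \<Rightarrow> 'a set \<Rightarrow> int" where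
  "hs K S F w X = (\<Sum>A\<in>hypercube K S \<inter> F. ss A w X)"

end

theory Submission
  imports Defs
begin

theorem lemma3:
  fixes F :: "'a set set" and w :: "'a \<Rightarrow> nat" and K S :: "'a set"
  assumes "finite F" and "\<forall>A\<in>F. finite A"
    and "\<exists>a\<in>\<Union>F. w a > 0"
    and "K \<union> S = \<Union>F" and "K \<inter> S = {}"
    and "\<forall>K'. K' \<subseteq> K \<longrightarrow> hs K' S F w (\<Union>F) \<ge> 0"
  shows "frankls F"
proof (rule ccontr)
  assume nf: "\<not> frankls F"
  define U where "U = \<Union>F"
  have finU: "finite U" using assms(1,2) U_def by auto
  define g where "g A = ss A w U" for A
  have part: "sum g F = (\<Sum>K'\<in>(\<lambda>A. A \<inter> K) ` F. sum g {A. A \<in> F \<and> A \<inter> K = K'})"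
    by (rule sum.image_gen[OF assms(1)])
  have eq: "{A. A \<in> F \<and> A \<inter> K = K'} = hypercube K' S \<inter> F" if "K' \<subseteq> K" for K'
  proof -
    have "A \<subseteq> K \<union> S" if "A \<in> F" for A using that assms(4) by auto
    thus ?thesis using that assms(5) unfolding hypercube_def by auto
  qed
  have "sum g F \<ge> 0"
    unfolding part
  proof (rule sum_nonneg)
    fix K' assume "K' \<in> (\<lambda>A. A \<inter> K) ` F"
    hence "K' \<subseteq> K" by auto
    thus "0 \<le> sum g {A. A \<in> F \<and> A \<inter> K = K'}"
      using eq assms(6) unfolding hs_def g_def U_def by auto
  qed
  moreover have "sum g F = (\<Sum>a\<in>U. int (w a) * (2 * int (card {A\<in>F. a \<in> A}) - int (card F)))"
  proof -
    have swA: "int (sw w A) = (\<Sum>a\<in>U. if a \<in> A then int (w a) else 0)" if "A \<in> F" for A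
    proof -
      have "A \<subseteq> U" using that U_def by auto
      hence "(\<Sum>a\<in>U. if a \<in> A then int (w a) else 0) = (\<Sum>a\<in>A. int (w a))"
        using finU by (simp add: sum.If_cases Int_absorb1)
      thus ?thesis unfolding sw_def by simp
    qed
    have "sum g F = (\<Sum>A\<in>F. (\<Sum>a\<in>U. 2 * (if a \<in> A then int (w a) else 0) - int (w a)))"
      unfolding g_def ss_def
    proof (rule sum.cong)
      fix A assume "A \<in> F"
      have "int (sw w U) = (\<Sum>a\<in>U. int (w a))" unfolding sw_def by simp
      thus "2 * int (sw w A) - int (sw w U) = (\<Sum>a\<in>U. 2 * (if a \<in> A then int (w a) else 0) - int (w a))"
        using swA[OF \<open>A \<in> F\<close>] by (simp add: sum_subtractf sum_distrib_left)
    qed simp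
    also have "\<dots> = (\<Sum>a\<in>U. (\<Sum>A\<in>F. 2 * (if a \<in> A then int (w a) else 0) - int (w a)))"
      by (rule sum.swap)
    also have "\<dots> = (\<Sum>a\<in>U. int (w a) * (2 * int (card {A\<in>F. a \<in> A}) - int (card F)))"
    proof (rule sum.cong)
      fix a assume "a \<in> U"
      have "(\<Sum>A\<in>F. 2 * (if a \<in> A then int (w a) else 0) - int (w a))
          = 2 * (\<Sum>A\<in>F. (if a \<in> A then int (w a) else 0)) - int (card F) * int (w a)"
        by (simp add: sum_subtractf sum_distrib_left)
      also have "(\<Sum>A\<in>F. (if a \<in> A then int (w a) else 0)) = int (card {A\<in>F. a \<in> A}) * int (w a)"
        using assms(1) by (simp add: sum.If_cases Int_def conj_commute)
      finally show "(\<Sum>A\<in>F. 2 * (if a \<in> A then int (w a) else 0) - int (w a))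
          = int (w a) * (2 * int (card {A\<in>F. a \<in> A}) - int (card F))"
        by (simp add: algebra_simps)
    qed simp
    finally show ?thesis .
  qed
  moreover have "(\<Sum>a\<in>U. int (w a) * (2 * int (card {A\<in>F. a \<in> A}) - int (card F))) < (\<Sum>a\<in>U. 0)"
  proof (rule sum_strict_mono_ex1[OF finU])
    have lt: "2 * card {A\<in>F. a \<in> A} < card F" if "a \<in> U" for a
      using nf that U_def unfolding frankls_def by (auto simp: not_le)
    show "\<forall>x\<in>U. int (w x) * (2 * int (card {A\<in>F. x \<in> A}) - int (card F)) \<le> 0"
    proof
      fix x assume "x \<in> U"
      with lt[of x] have "2 * int (card {A\<in>F. x \<in> A}) - int (card F) < 0" by linarith
      thus "int (w x) * (2 * int (card {A\<in>F. x \<in> A}) - int (card F)) \<le> 0"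
        by (simp add: mult_nonneg_nonpos)
    qed
    obtain a where a: "a \<in> U" "w a > 0" using assms(3) U_def by auto
    with lt[of a] have "2 * int (card {A\<in>F. a \<in> A}) - int (card F) < 0" by linarith
    with a show "\<exists>x\<in>U. int (w x) * (2 * int (card {A\<in>F. x \<in> A}) - int (card F)) < 0"
      by (intro bexI[of _ a]) (auto simp: mult_pos_neg)
  qed
  ultimately show False by simp
qed

end
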